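(* Consider the $l$-th cycle of RPF-SFISTA and assume $\mu=\mu_{l-1}\in(0,\bar\mu]$. For $j\ge0$ and $x\in\mathcal H$ let $\sigma_j(x):=A_j[\phi(y_j)-\phi(x)]+\frac{\tau_j}{2}\|x-x_j\|^2$. Then for every iteration index $j\ge1$ generated in this cycle and every $x\in\mathcal H$, $$\sigma_{j-1}(x)-\sigma_j(x)\ \ge\ \frac{\chi A_jL_j}{2}\|y_j-\tilde x_{j-1}\|^2.$$
   Context: Setup. Let $f:\mathbb R^n\to\mathbb R$ be convex and differentiable with $\|\nabla f(z')-\nabla f(z)\|\le\bar L\|z'-z\|$ for all $z,z'\in\mathbb R^n$ (some $\bar L\ge0$). Let $h:\mathbb R^n\to(-\infty,\infty]$ be proper, lower semicontinuous and convex with domain $\mathcal H$. Let $\phi:=f+h$ be $\bar\mu$-strongly convex for some $\bar\mu>0$. Write $\ell_f(u;x):=f(x)+\langle\nabla f(x),u-x\rangle$. RPF-SFISTA. Parameters $\chi\in(0,1)$, $\beta>1$; inputs $\mu_0>0$, $\bar M_0>0$, $z_0\in\mathcal H$, $\hat\epsilon>0$. The method runs in cycles $l=1,2,\dots$. At the start of cycle $l$: choose $\underline M_l\in[\max\{\bar M_{l-1}/4,\bar M_0\},\bar M_{l-1}]$ (so $\underline M_1=\bar M_0$), set $\mu:=\mu_{l-1}$, $x_0:=z_{l-1}$, $\xi_0:=y_0:=x_0$, $A_0:=0$, $\tau_0:=1$, $L_0:=\underline M_l$. Then for $j=1,2,\dots$: (i) set $L_j:=L_{j-1}$; (ii) compute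 $a_{j-1}=\frac{\tau_{j-1}+\sqrt{\tau_{j-1}^2+4\tau_{j-1}A_{j-1}L_j}}{2L_j}$, $\tilde x_{j-1}=\frac{A_{j-1}y_{j-1}+a_{j-1}x_{j-1}}{A_{j-1}+a_{j-1}}$, $y_j=\arg\min_{u}\{\ell_f(u;\tilde x_{j-1})+h(u)+\frac{L_j}{2}\|u-\tilde x_{j-1}\|^2\}$; if $f(y_j)\le\ell_f(y_j;\tilde x_{j-1})+\frac{(1-\chi)L_j}{4}\|y_j-\tilde x_{j-1}\|^2$ go to (iii), otherwise replace $L_j$ by $\beta L_j$ and repeat (ii); (iii) set $\xi_j:=y_j$ if $\phi(y_j)\le\phi(\xi_{j-1})$ and $\xi_j:=\xi_{j-1}$ otherwise; $A_j:=A_{j-1}+a_{j-1}$; $\tau_j:=\tau_{j-1}+a_{j-1}\mu/2$; $s_j:=L_j(\tilde x_{j-1}-y_j)$; $x_j:=\tau_j^{-1}[\mu a_{j-1}y_j/2+\tau_{j-1}x_{j-1}-a_{j-1}s_j]$; $v_j:=\nabla f(y_j)-\nabla f(\tilde x_{j-1})+s_j$; (iv) if $\|\xi_j-x_0\|^2<\chi A_jL_j\|y_j-\tilde x_{j-1}\|^2$, the cycle ends with a restart: set $z_l:=\xi_j$, $\bar M_l:=L_j$, $\mu_l:=\mu/2$ and start cycle $l+1$; (v) otherwise, if $\|v_j\|\le\hat\epsilon$, stop and output $(y,v,\xi,L):=(y_j,v_j,\xi_j,L_j)$; else go to iteration $j+1$. In these formulas $L_j$, $a_{j-1}$, $\tilde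 x_{j-1}$, $y_j$ denote the final (accepted) values after the line search in (ii). *)

theory Defs
  imports "HOL-Analysis.Analysis"
begin

definition ext_fun :: "('a \<Rightarrow> real) \<Rightarrow> 'a set \<Rightarrow> 'a \<Rightarrow> ereal" where
  "ext_fun h H x = (if x \<in> H then ereal (h x) else \<infinity>)"

definition proper_lsc_convex :: "('a::real_normed_vector \<Rightarrow> real) \<Rightarrow> 'a set \<Rightarrow> bool" where
  "proper_lsc_convex h H \<longleftrightarrow> H \<noteq> {} \<and> convex H \<and> convex_on H h \<and>
     (\<forall>c::real. closed {x. ext_fun h H x \<le> ereal c})"

text \<open>phi (real-valued on its domain H, +infinity outside) is mu-strongly convex.\<close>
definition strongly_convex_on :: "'a set \<Rightarrow> ('a::real_normed_vector \<Rightarrow> real) \<Rightarrow> real \<Rightarrow> bool" where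
  "strongly_convex_on H phi m \<longleftrightarrow> convex H \<and>
     (\<forall>x\<in>H. \<forall>y\<in>H. \<forall>t::real. 0 \<le> t \<and> t \<le> 1 \<longrightarrow>
        phi (t *\<^sub>R x + (1 - t) *\<^sub>R y) \<le> t * phi x + (1 - t) * phi y - m / 2 * t * (1 - t) * (norm (x - y))\<^sup>2)"

definition lin_f :: "('a::real_inner \<Rightarrow> real) \<Rightarrow> ('a \<Rightarrow> 'a) \<Rightarrow> 'a \<Rightarrow> 'a \<Rightarrow> real" where
  "lin_f f gf u x = f x + inner (gf x) (u - x)"

end

theory Submission
  imports Defs
begin

lemma grad_ineq:
  fixes f :: "'a::real_inner \<Rightarrow> real"
  assumes fd: "\<And>z. (f has_derivative (\<lambda>d. inner (gf z) d)) (at z)"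
    and fc: "convex_on UNIV f"
  shows "f u \<ge> lin_f f gf u x0"
proof -
  define g where "g t = f (x0 + t *\<^sub>R (u - x0))" for t :: real
  have gc: "convex_on UNIV g"
  proof (rule convex_onI)
    fix t s1 s2 :: real assume t: "0 < t" "t < 1"
    have "x0 + ((1 - t) * s1 + t * s2) *\<^sub>R (u - x0) = (1 - t) *\<^sub>R (x0 + s1 *\<^sub>R (u - x0)) + t *\<^sub>R (x0 + s2 *\<^sub>R (u - x0))"
      by (simp add: algebra_simps)
    then show "g ((1 - t) *\<^sub>R s1 + t *\<^sub>R s2) \<le> (1 - t) * g s1 + t * g s2"
      unfolding g_def using convex_onD[OF fc, of t] t by simp
  qed simp
  have "((\<lambda>t. x0 + t *\<^sub>R (u - x0)) has_derivative (\<lambda>t. t *\<^sub>R (u - x0))) (at 0)"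
    by (auto intro!: derivative_eq_intros)
  from has_derivative_compose[OF this fd]
  have "(g has_derivative (\<lambda>t. inner (gf x0) (t *\<^sub>R (u - x0)))) (at 0)"
    unfolding g_def o_def by simp
  then have "(g has_field_derivative inner (gf x0) (u - x0)) (at 0)"
  proof -
    have e: "(\<lambda>t. t * inner (gf x0) (u - x0)) = (*) (inner (gf x0) (u - x0))" by (rule ext) simp
    show ?thesis using \<open>(g has_derivative _) _\<close> unfolding has_field_derivative_def by (simp add: e)
  qed
  then have "g 1 - g 0 \<ge> inner (gf x0) (u - x0) * (1 - 0)"
    using convex_on_imp_above_tangent[OF gc, of 0 1] by simp
  then show ?thesis unfolding g_def lin_f_def by simp
qed

lemma norm_expand:
  fixes p q :: "'a::real_inner"
  shows "(norm (p + e *\<^sub>R q))\<^sup>2 = (norm p)\<^sup>2 + 2 * e * inner p q + e\<^sup>2 * (norm q)\<^sup>2"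
  unfolding power2_norm_eq_inner
  by (simp add: inner_add_left inner_add_right inner_commute algebra_simps power2_eq_square)

lemma first_order:
  fixes f h :: "'a::real_inner \<Rightarrow> real"
  assumes Hc: "convex H" and hc: "convex_on H h"
    and yH: "y \<in> H"
    and opt: "\<forall>u\<in>H. lin_f f gf y xt + h y + L/2*(norm(y-xt))\<^sup>2 \<le> lin_f f gf u xt + h u + L/2*(norm(u-xt))\<^sup>2"
    and wH: "w \<in> H" and L: "L \<ge> 0"
  shows "lin_f f gf w xt + h w - (lin_f f gf y xt + h y) - inner (L *\<^sub>R (xt - y)) (w - y) \<ge> 0"
proof (rule ccontr)
  define G where "G = lin_f f gf w xt + h w - (lin_f f gf y xt + h y) - inner (L *\<^sub>R (xt - y)) (w - y)"
  define D where "D = (norm (w - y))\<^sup>2"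
  assume "\<not> ?thesis"
  then have G: "G < 0" unfolding G_def by simp
  have key: "G \<ge> - L * e * D / 2" if e: "0 < e" "e \<le> 1" for e
  proof -
    define w' where "w' = y + e *\<^sub>R (w - y)"
    have w'eq: "w' = (1 - e) *\<^sub>R y + e *\<^sub>R w" unfolding w'_def by (simp add: algebra_simps)
    have w'H: "w' \<in> H" unfolding w'eq using Hc yH wH e by (simp add: convex_def)
    have hw': "h w' \<le> (1 - e) * h y + e * h w" unfolding w'eq using convex_onD[OF hc, of e y w] e yH wH by simp
    have lw': "lin_f f gf w' xt = (1 - e) * lin_f f gf y xt + e * lin_f f gf w xt"
      unfolding w'eq lin_f_def by (simp add: inner_diff_right inner_add_right algebra_simps)
    have weq: "w' - xt = (y - xt) + e *\<^sub>R (w - y)" unfolding w'_def by simp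
    have nw': "(norm (w' - xt))\<^sup>2 = (norm (y - xt))\<^sup>2 + 2 * e * inner (y - xt) (w - y) + e\<^sup>2 * D"
      unfolding D_def weq by (rule norm_expand)
    have ip: "inner (L *\<^sub>R (xt - y)) (w - y) = - L * inner (y - xt) (w - y)"
      by (simp add: inner_diff_left algebra_simps)
    have "lin_f f gf y xt + h y + L/2*(norm(y-xt))\<^sup>2 \<le> lin_f f gf w' xt + h w' + L/2*(norm(w'-xt))\<^sup>2"
      using opt w'H by blast
    then have "0 \<le> e * G + L * e\<^sup>2 * D / 2"
      unfolding G_def ip using hw' lw' nw' by (simp add: algebra_simps)
    then have "0 \<le> e * (G + L * e * D / 2)" by (simp add: algebra_simps power2_eq_square)
    then have "0 \<le> G + L * e * D / 2" using e by (simp add: zero_le_mult_iff)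
    then show ?thesis by simp
  qed
  define e where "e = min 1 (- G / (L * D + 1))"
  have D0: "D \<ge> 0" unfolding D_def by simp
  have LD: "L * D + 1 > 0" using L D0 by (smt (verit) mult_nonneg_nonneg)
  have e0: "0 < e" "e \<le> 1" unfolding e_def using G LD by (auto simp: divide_neg_pos)
  have "e * (L * D + 1) \<le> - G" unfolding e_def using LD G
    by (smt (verit) min.cobounded2 mult_right_mono nonzero_eq_divide_eq mult.commute)
  then have "L * e * D \<le> - G" using e0 by (simp add: algebra_simps)
  moreover have "L * e * D \<ge> 0" using L e0 D0 by simp
  ultimately have "- L * e * D / 2 > G" using G by linarith
  with key[OF e0] show False by linarith
qed

lemma model:
  fixes f h :: "'a::real_inner \<Rightarrow> real"
  assumes gi: "\<And>u x. f u \<ge> lin_f f gf u x"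
    and Hc: "convex H" and hc: "convex_on H h"
    and sc: "strongly_convex_on H (\<lambda>u. f u + h u) mb"
    and yH: "y \<in> H"
    and opt: "\<forall>u\<in>H. lin_f f gf y xt + h y + L/2*(norm(y-xt))\<^sup>2 \<le> lin_f f gf u xt + h u + L/2*(norm(u-xt))\<^sup>2"
    and acc: "f y \<le> lin_f f gf y xt + (1-chi)*L/4*(norm(y-xt))\<^sup>2"
    and uH: "u \<in> H" and L: "L \<ge> 0" and mu: "mu \<le> mb"
  shows "f u + h u \<ge> f y + h y + inner (L *\<^sub>R (xt - y)) (u - y) + mu/4*(norm(u-y))\<^sup>2
           - (1-chi)*L/2*(norm(y-xt))\<^sup>2"
proof -
  define w where "w = (1/2) *\<^sub>R u + (1 - 1/2) *\<^sub>R y"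
  have wH: "w \<in> H" unfolding w_def using Hc uH yH by (simp add: convex_def)
  have s1: "f w + h w \<le> 1/2 * (f u + h u) + (1 - 1/2) * (f y + h y) - mb/2 * (1/2) * (1 - 1/2) * (norm (u - y))\<^sup>2"
    using sc uH yH unfolding strongly_convex_on_def w_def by (metis (no_types, lifting) field_sum_of_halves le_add_same_cancel1 less_eq_real_def one_add_one zero_less_divide_1_iff zero_less_two)
  have s2: "f w \<ge> lin_f f gf w xt" by (rule gi)
  have s3: "lin_f f gf w xt + h w - (lin_f f gf y xt + h y) - inner (L *\<^sub>R (xt - y)) (w - y) \<ge> 0"
    by (rule first_order[OF Hc hc yH opt wH L])
  have wy: "w - y = (1/2) *\<^sub>R (u - y)" unfolding w_def by (simp add: algebra_simps flip: scaleR_add_left)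
  have s4: "inner (L *\<^sub>R (xt - y)) (w - y) = 1/2 * inner (L *\<^sub>R (xt - y)) (u - y)"
    unfolding wy by simp
  have n0: "(norm (u - y))\<^sup>2 \<ge> 0" by simp
  have s5: "mu/4*(norm(u-y))\<^sup>2 \<le> mb/4*(norm(u-y))\<^sup>2" using mu n0 by (simp add: mult_right_mono)
  have s1b: "f w + h w \<le> (f u + h u)/2 + (f y + h y)/2 - mb/4 * (norm (u - y))\<^sup>2 / 2" using s1 by simp
  show ?thesis using s1b s2 s3 s4 s5 acc by (simp add: field_simps)
qed

lemma quad_real:
  fixes PP PQ PS QQ QS SS :: real
  assumes t0: "t0 > 0" and c: "c \<ge> 0" and t: "t = t0 + c"
    and cs: "0 \<le> c * (t0\<^sup>2 * QQ + 2 * t0 * a * QS + a\<^sup>2 * SS)"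
  shows "a * PS + c/2 * (PP - 2 * PQ + QQ) + t0/2 * PP - t/2 * (PP - 2 / t * (c * PQ - a * PS)
       + (c\<^sup>2 * QQ - 2 * c * a * QS + a\<^sup>2 * SS) / t\<^sup>2) \<ge> - a\<^sup>2 * SS / (2 * t0)"
proof -
  have tp: "t > 0" using t0 c t by simp
  have eq: "a * PS + c/2 * (PP - 2 * PQ + QQ) + t0/2 * PP - t/2 * (PP - 2 / t * (c * PQ - a * PS)
       + (c\<^sup>2 * QQ - 2 * c * a * QS + a\<^sup>2 * SS) / t\<^sup>2) + a\<^sup>2 * SS / (2 * t0)
     = c * (t0\<^sup>2 * QQ + 2 * t0 * a * QS + a\<^sup>2 * SS) / (2 * t * t0)"
    using t0 tp by (simp add: field_simps power2_eq_square, simp add: t algebra_simps)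
  have "c * (t0\<^sup>2 * QQ + 2 * t0 * a * QS + a\<^sup>2 * SS) / (2 * t * t0) \<ge> 0"
    using cs t0 tp by simp
  then show ?thesis using eq by linarith
qed

lemma quad:
  fixes z x0 y s xp :: "'a::real_inner"
  assumes t0: "t0 > 0" and c: "c \<ge> 0" and t: "t = t0 + c"
    and xp: "xp = x0 + (1 / t) *\<^sub>R (c *\<^sub>R (y - x0) - a *\<^sub>R s)"
  shows "a * inner s (z - x0) + c/2 * (norm (z - y))\<^sup>2 + t0/2 * (norm (z - x0))\<^sup>2 - t/2 * (norm (z - xp))\<^sup>2
    \<ge> - a\<^sup>2 * (norm s)\<^sup>2 / (2 * t0)"
proof -
  define p where "p = z - x0"
  define q where "q = y - x0"
  have tp: "t > 0" using t0 c t by simp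
  have e1: "z - xp = p - (1 / t) *\<^sub>R (c *\<^sub>R q - a *\<^sub>R s)" unfolding p_def q_def xp by simp
  have e2: "z - y = p - q" unfolding p_def q_def by simp
  have n1: "(norm (p - (1 / t) *\<^sub>R (c *\<^sub>R q - a *\<^sub>R s)))\<^sup>2 = inner p p - 2 / t * (c * inner p q - a * inner p s)
       + (c\<^sup>2 * inner q q - 2 * c * a * inner q s + a\<^sup>2 * inner s s) / t\<^sup>2"
    unfolding power2_norm_eq_inner
    by (simp add: inner_diff_left inner_diff_right inner_commute algebra_simps power2_eq_square divide_simps)
  have n2: "(norm (p - q))\<^sup>2 = inner p p - 2 * inner p q + inner q q"
    unfolding power2_norm_eq_inner by (simp add: inner_diff_left inner_diff_right inner_commute)
  have n3: "(norm p)\<^sup>2 = inner p p" "(norm s)\<^sup>2 = inner s s" by (simp_all add: power2_norm_eq_inner)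
  have sq: "0 \<le> inner (t0 *\<^sub>R q + a *\<^sub>R s) (t0 *\<^sub>R q + a *\<^sub>R s)" by simp
  have sq': "0 \<le> t0\<^sup>2 * inner q q + 2 * t0 * a * inner q s + a\<^sup>2 * inner s s"
    using sq by (simp add: inner_add_left inner_add_right inner_commute algebra_simps power2_eq_square)
  have cs: "0 \<le> c * (t0\<^sup>2 * inner q q + 2 * t0 * a * inner q s + a\<^sup>2 * inner s s)"
    using c sq' by simp
  show ?thesis
    unfolding e1 e2 n1 n2 n3 p_def[symmetric] using quad_real[OF t0 c t cs] by (simp add: inner_commute)
qed

lemma combine:
  fixes Ap a A L tp tn mu chi r2 Py Pz Pn I1 I2 I3 N1 N2 Nx Nn SS :: real
  assumes Ap: "Ap \<ge> 0" and a: "a > 0" and A: "A = Ap + a" and tp: "tp > 0" and L: "L > 0"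
    and mu: "mu \<ge> 0" and N1: "N1 \<ge> 0"
    and M1: "Py \<ge> Pn + I1 + mu/4*N1 - (1-chi)*L/2*r2"
    and M2: "Pz \<ge> Pn + I2 + mu/4*N2 - (1-chi)*L/2*r2"
    and Q: "a*I3 + (a*mu/2)/2*N2 + tp/2*Nx - tn/2*Nn \<ge> - a\<^sup>2*SS/(2*tp)"
    and X: "Ap*I1 + a*I2 = A*L*r2 + a*I3"
    and S: "SS = L\<^sup>2 * r2"
    and Qd: "L*a\<^sup>2 = tp*A"
  shows "(Ap*(Py - Pz) + tp/2*Nx) - (A*(Pn - Pz) + tn/2*Nn) \<ge> chi*A*L/2*r2"
proof -
  have m1: "Ap*Py \<ge> Ap*(Pn + I1 + mu/4*N1 - (1-chi)*L/2*r2)" using M1 Ap by (rule mult_left_mono)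
  have m2: "a*Pz \<ge> a*(Pn + I2 + mu/4*N2 - (1-chi)*L/2*r2)" using M2 a by simp
  have n1: "Ap*(mu/4*N1) \<ge> 0" using Ap mu N1 by simp
  have e: "a\<^sup>2*SS/(2*tp) = A*L*r2/2"
  proof -
    have "a\<^sup>2*SS/(2*tp) = L * r2 * (L*a\<^sup>2) / (2*tp)" unfolding S by (simp add: power2_eq_square algebra_simps)
    also have "\<dots> = A*L*r2/2" unfolding Qd using tp by (simp add: field_simps)
    finally show ?thesis .
  qed
  have "(Ap*(Py - Pz) + tp/2*Nx) - (A*(Pn - Pz) + tn/2*Nn)
      = Ap*Py + a*Pz - A*Pn + tp/2*Nx - tn/2*Nn" unfolding A by (simp add: algebra_simps)
  also have "\<dots> \<ge> (Ap*I1 + a*I2) + a*(mu/4*N2) - A*((1-chi)*L/2*r2) + tp/2*Nx - tn/2*Nn"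
  proof -
    have m1': "Ap*Py \<ge> Ap*Pn + Ap*I1 + Ap*(mu/4*N1) - Ap*((1-chi)*L/2*r2)" using m1 by (simp only: ring_distribs)
    have m2': "a*Pz \<ge> a*Pn + a*I2 + a*(mu/4*N2) - a*((1-chi)*L/2*r2)" using m2 by (simp only: ring_distribs)
    have d: "A*((1-chi)*L/2*r2) = Ap*((1-chi)*L/2*r2) + a*((1-chi)*L/2*r2)" "A*Pn = Ap*Pn + a*Pn"
      unfolding A by (simp_all only: ring_distribs)
    show ?thesis using m1' m2' n1 d by linarith
  qed
  finally have "(Ap*(Py - Pz) + tp/2*Nx) - (A*(Pn - Pz) + tn/2*Nn) \<ge>
      A*L*r2 + (a*I3 + (a*mu/2)/2*N2 + tp/2*Nx - tn/2*Nn) - A*((1-chi)*L/2*r2)"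
    unfolding X by (simp add: algebra_simps)
  moreover have "A*L*r2 - A*L*r2/2 - A*((1-chi)*L/2*r2) = chi*A*L/2*r2" by (simp add: field_simps)
  ultimately show ?thesis using Q e by linarith
qed

theorem lemmaA6:
  fixes f h :: "real ^ 'n \<Rightarrow> real"
    and gf :: "real ^ 'n \<Rightarrow> real ^ 'n"
    and H :: "(real ^ 'n) set"
    and Lbar mubar chi beta mu epshat :: real
    and N :: nat
    and L a A tau :: "nat \<Rightarrow> real"
    and x y xt xi :: "nat \<Rightarrow> real ^ 'n"
  assumes f_grad: "\<And>z. (f has_derivative (\<lambda>d. inner (gf z) d)) (at z)"
    and f_convex: "convex_on UNIV f"
    and f_lip: "\<And>z z'. norm (gf z' - gf z) \<le> Lbar * norm (z' - z)"
    and Lbar_nonneg: "Lbar \<ge> 0"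
    and h_plc: "proper_lsc_convex h H"
    and phi_sc: "strongly_convex_on H (\<lambda>u. f u + h u) mubar"
    and mubar_pos: "mubar > 0"
    and chi: "0 < chi" "chi < 1"
    and beta: "beta > 1"
    and epshat: "epshat > 0"
    and mu: "0 < mu" "mu \<le> mubar"
    \<comment> \<open>initialization of the cycle\<close>
    and x0: "x 0 \<in> H"
    and y0: "y 0 = x 0"
    and xi0: "xi 0 = x 0"
    and A0: "A 0 = 0"
    and tau0: "tau 0 = 1"
    and L0: "L 0 > 0"
    \<comment> \<open>iterations j = 1..N of the cycle, with accepted line-search values\<close>
    and L_ls: "\<And>j. 1 \<le> j \<Longrightarrow> j \<le> N \<Longrightarrow> \<exists>k::nat. L j = beta ^ k * L (j - 1)"
    and a_def: "\<And>j. 1 \<le> j \<Longrightarrow> j \<le> N \<Longrightarrow>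
       a (j - 1) = (tau (j - 1) + sqrt ((tau (j - 1))\<^sup>2 + 4 * tau (j - 1) * A (j - 1) * L j)) / (2 * L j)"
    and xt_def: "\<And>j. 1 \<le> j \<Longrightarrow> j \<le> N \<Longrightarrow>
       xt (j - 1) = (1 / (A (j - 1) + a (j - 1))) *\<^sub>R (A (j - 1) *\<^sub>R y (j - 1) + a (j - 1) *\<^sub>R x (j - 1))"
    and y_argmin: "\<And>j. 1 \<le> j \<Longrightarrow> j \<le> N \<Longrightarrow> y j \<in> H \<and>
       (\<forall>u\<in>H. lin_f f gf (y j) (xt (j - 1)) + h (y j) + L j / 2 * (norm (y j - xt (j - 1)))\<^sup>2
               \<le> lin_f f gf u (xt (j - 1)) + h u + L j / 2 * (norm (u - xt (j - 1)))\<^sup>2)"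
    and ls_accept: "\<And>j. 1 \<le> j \<Longrightarrow> j \<le> N \<Longrightarrow>
       f (y j) \<le> lin_f f gf (y j) (xt (j - 1)) + (1 - chi) * L j / 4 * (norm (y j - xt (j - 1)))\<^sup>2"
    and xi_def: "\<And>j. 1 \<le> j \<Longrightarrow> j \<le> N \<Longrightarrow>
       xi j = (if f (y j) + h (y j) \<le> f (xi (j - 1)) + h (xi (j - 1)) then y j else xi (j - 1))"
    and A_def: "\<And>j. 1 \<le> j \<Longrightarrow> j \<le> N \<Longrightarrow> A j = A (j - 1) + a (j - 1)"
    and tau_def: "\<And>j. 1 \<le> j \<Longrightarrow> j \<le> N \<Longrightarrow> tau j = tau (j - 1) + a (j - 1) * mu / 2"
    and x_def: "\<And>j. 1 \<le> j \<Longrightarrow> j \<le> N \<Longrightarrow>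
       x j = (1 / tau j) *\<^sub>R ((mu * a (j - 1) / 2) *\<^sub>R y j + tau (j - 1) *\<^sub>R x (j - 1)
                                 - a (j - 1) *\<^sub>R (L j *\<^sub>R (xt (j - 1) - y j)))"
    \<comment> \<open>iterations 1..N-1 neither restarted nor stopped, so iteration N is generated in this cycle\<close>
    and no_restart: "\<And>j. 1 \<le> j \<Longrightarrow> j < N \<Longrightarrow>
       \<not> ((norm (xi j - x 0))\<^sup>2 < chi * A j * L j * (norm (y j - xt (j - 1)))\<^sup>2)"
    and no_stop: "\<And>j. 1 \<le> j \<Longrightarrow> j < N \<Longrightarrow>
       \<not> (norm (gf (y j) - gf (xt (j - 1)) + L j *\<^sub>R (xt (j - 1) - y j)) \<le> epshat)"
    and j: "1 \<le> j" "j \<le> N"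
    and xH: "z \<in> H"
  shows "let \<sigma> = (\<lambda>i. A i * ((f (y i) + h (y i)) - (f z + h z)) + tau i / 2 * (norm (z - x i))\<^sup>2)
         in \<sigma> (j - 1) - \<sigma> j \<ge> chi * A j * L j / 2 * (norm (y j - xt (j - 1)))\<^sup>2"
proof -
  have Hc: "convex H" and hc: "convex_on H h" using h_plc unfolding proper_lsc_convex_def by auto
  have gi: "\<And>u x. f u \<ge> lin_f f gf u x" using grad_ineq[OF f_grad f_convex] .
  have pos: "i \<le> N \<Longrightarrow> L i > 0 \<and> tau i > 0 \<and> A i \<ge> 0" for i
  proof (induction i)
    case 0 show ?case using L0 tau0 A0 by simp
  next
    case (Suc i)
    then have IH: "L i > 0" "tau i > 0" "A i \<ge> 0" by auto
    obtain k where k: "L (Suc i) = beta^k * L i" using L_ls[of "Suc i"] Suc.prems by auto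
    have LS: "L (Suc i) > 0" using k IH beta by simp
    have sq: "sqrt ((tau i)\<^sup>2 + 4*tau i*A i*L(Suc i)) \<ge> 0" using IH LS by simp
    have "a i = (tau i + sqrt ((tau i)\<^sup>2 + 4*tau i*A i*L(Suc i))) / (2 * L (Suc i))"
      using a_def[of "Suc i"] Suc.prems by simp
    also have "\<dots> > 0" using IH LS sq by (intro divide_pos_pos; linarith)
    finally have ai: "a i > 0" .
    then show ?case using tau_def[of "Suc i"] A_def[of "Suc i"] Suc.prems IH LS mult_pos_pos[OF ai mu(1)] by simp
  qed
  obtain i where ji: "j = Suc i" using j by (cases j) auto
  have jm: "j - 1 = i" using ji by simp
  have iN: "i \<le> N" "Suc i \<le> N" using j ji by auto
  have Lj: "L j > 0" using pos[of j] j by simp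
  have ti: "tau i > 0" and Ai: "A i \<ge> 0" using pos[OF iN(1)] by auto
  define D where "D = (tau i)\<^sup>2 + 4*tau i*A i*L j"
  have D0: "D \<ge> 0" unfolding D_def using ti Ai Lj by simp
  have aeq: "a i = (tau i + sqrt D) / (2 * L j)" using a_def[of j] j jm unfolding D_def by simp
  have ai: "a i > 0" unfolding aeq using ti Lj real_sqrt_ge_zero[OF D0] by (intro divide_pos_pos; linarith)
  have Aj: "A j = A i + a i" using A_def[of j] j jm by simp
  have tj: "tau j = tau i + a i * mu / 2" using tau_def[of j] j jm by simp
  have Ajp: "A j > 0" using Aj Ai ai by simp
  have sD: "(sqrt D)\<^sup>2 = D" using D0 by simp
  have Qd: "L j * (a i)\<^sup>2 = tau i * A j"
  proof -
    have "L j * (a i)\<^sup>2 = (tau i + sqrt D)\<^sup>2 / (4 * L j)" unfolding aeq using Lj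
      by (simp add: power2_eq_square field_simps)
    also have "\<dots> = ((tau i)\<^sup>2 + 2 * tau i * sqrt D + D) / (4 * L j)"
      by (simp add: power2_sum sD)
    also have "\<dots> = tau i * A j" unfolding Aj aeq D_def using Lj
      by (simp add: field_simps power2_eq_square)
    finally show ?thesis .
  qed
  have xteq: "A j *\<^sub>R xt i = A i *\<^sub>R y i + a i *\<^sub>R x i"
    using xt_def[of j] j jm Ajp Aj by simp
  have yiH: "y i \<in> H"
  proof (cases i)
    case 0 then show ?thesis using x0 y0 by simp
  next
    case (Suc m) then show ?thesis using y_argmin[of i] iN ji j by simp
  qed
  have yj: "y j \<in> H" and opt: "\<forall>u\<in>H. lin_f f gf (y j) (xt i) + h (y j) + L j / 2 * (norm (y j - xt i))\<^sup>2
               \<le> lin_f f gf u (xt i) + h u + L j / 2 * (norm (u - xt i))\<^sup>2"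
    using y_argmin[of j] j jm by auto
  have acc: "f (y j) \<le> lin_f f gf (y j) (xt i) + (1 - chi) * L j / 4 * (norm (y j - xt i))\<^sup>2"
    using ls_accept[of j] j jm by simp
  define s where "s = L j *\<^sub>R (xt i - y j)"
  define r2 where "r2 = (norm (y j - xt i))\<^sup>2"
  have M1: "f (y i) + h (y i) \<ge> f (y j) + h (y j) + inner s (y i - y j) + mu/4*(norm(y i - y j))\<^sup>2
           - (1-chi)*L j/2*r2"
    unfolding s_def r2_def by (rule model[OF gi Hc hc phi_sc yj opt acc yiH _ mu(2)]) (use Lj in simp)
  have M2: "f z + h z \<ge> f (y j) + h (y j) + inner s (z - y j) + mu/4*(norm(z - y j))\<^sup>2
           - (1-chi)*L j/2*r2"
    unfolding s_def r2_def by (rule model[OF gi Hc hc phi_sc yj opt acc xH _ mu(2)]) (use Lj in simp)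
  have xj: "x j = (1 / tau j) *\<^sub>R ((mu * a i / 2) *\<^sub>R y j + tau i *\<^sub>R x i - a i *\<^sub>R s)"
    using x_def[of j] j jm unfolding s_def by simp
  have tjp: "tau j > 0" using tj ti mult_pos_pos[OF ai mu(1)] by simp
  have xp: "x j = x i + (1 / tau j) *\<^sub>R ((a i * mu / 2) *\<^sub>R (y j - x i) - a i *\<^sub>R s)"
  proof -
    have "x i = (1 / tau j) *\<^sub>R (tau j *\<^sub>R x i)" using tjp by simp
    then have "x i + (1 / tau j) *\<^sub>R ((a i * mu / 2) *\<^sub>R (y j - x i) - a i *\<^sub>R s)
       = (1 / tau j) *\<^sub>R (tau j *\<^sub>R x i + ((a i * mu / 2) *\<^sub>R (y j - x i) - a i *\<^sub>R s))"
      by (metis scaleR_add_right)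
    also have "\<dots> = (1 / tau j) *\<^sub>R ((mu * a i / 2) *\<^sub>R y j + tau i *\<^sub>R x i - a i *\<^sub>R s)"
      unfolding tj by (simp add: algebra_simps)
    finally show ?thesis using xj by simp
  qed
  have c0: "a i * mu / 2 \<ge> 0" using ai mu by simp
  have Q: "a i * inner s (z - x i) + (a i * mu / 2)/2 * (norm (z - y j))\<^sup>2 + tau i/2 * (norm (z - x i))\<^sup>2
      - tau j/2 * (norm (z - x j))\<^sup>2 \<ge> - (a i)\<^sup>2 * (norm s)\<^sup>2 / (2 * tau i)"
    by (rule quad[OF ti c0 tj xp])
  have X: "A i * inner s (y i - y j) + a i * inner s (z - y j) = A j * L j * r2 + a i * inner s (z - x i)"
  proof -
    have v: "A i *\<^sub>R (y i - y j) + a i *\<^sub>R (z - y j) = A j *\<^sub>R (xt i - y j) + a i *\<^sub>R (z - x i)"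
      using xteq unfolding Aj by (simp add: algebra_simps)
    have "A i * inner s (y i - y j) + a i * inner s (z - y j) = inner s (A i *\<^sub>R (y i - y j) + a i *\<^sub>R (z - y j))"
      by (simp add: inner_add_right)
    also have "\<dots> = A j * inner s (xt i - y j) + a i * inner s (z - x i)"
      unfolding v by (simp add: inner_add_right)
    also have "inner s (xt i - y j) = L j * r2"
      unfolding s_def r2_def by (simp add: power2_norm_eq_inner norm_minus_commute[of "y j"] inner_commute)
    finally show ?thesis by simp
  qed
  have S: "(norm s)\<^sup>2 = (L j)\<^sup>2 * r2"
    unfolding s_def r2_def using Lj by (simp add: power_mult_distrib norm_minus_commute)
  have N1: "(norm (y i - y j))\<^sup>2 \<ge> 0" by simp
  have "(A i * ((f (y i) + h (y i)) - (f z + h z)) + tau i / 2 * (norm (z - x i))\<^sup>2)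
      - (A j * ((f (y j) + h (y j)) - (f z + h z)) + tau j / 2 * (norm (z - x j))\<^sup>2)
      \<ge> chi * A j * L j / 2 * r2"
    by (rule combine[OF Ai ai Aj ti Lj _ N1 M1 M2 Q X S Qd]) (use mu in simp)
  then show ?thesis unfolding Let_def jm r2_def by simp
qed

end
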